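(* Fix $J\ge 2$ and sample sizes $n_1,\ldots,n_J$ with $\min_j n_j\ge 2$. For each dimension $d$, let $F_1,\ldots,F_J$ be distributions on $\mathbb{R}^d$ with finite second moments, means $\boldsymbol{\mu}_j$ and covariances $\boldsymbol{\Sigma}_j$, satisfying assumptions (A1) and (A2) stated in the context. Let $\mathbf{X}_{j1},\ldots,\mathbf{X}_{jn_j}\overset{iid}{\sim}F_j$, $j=1,\ldots,J$, be independent collections. Let $\Psi:[0,\infty)\to[0,\infty)$ be a continuous (decreasing) function not depending on $d$, and let $h=h_d$ satisfy $h^2/d\to C_0>0$ as $d\to\infty$. Define the empirical local Mahalanobis distances computed with the identity matrix, $$\widehat\beta_{h,j}(\mathbf{x})=\frac1{n_j}\sum_{i=1}^{n_j}\Psi\Big(\frac{\|\mathbf{x}-\mathbf{X}_{ji}\|^2}{h^2}\Big)\|\mathbf{x}-\mathbf{X}_{ji}\|^2,\qquad \widehat\gamma_j^h(\mathbf{x})=\begin{cases}\widehat\beta_{h,j}(\mathbf{x})& h>1,\\ \widehat\beta_{h,j}(\mathbf{x})/h^{d+2}& h\le1,\end{cases}$$ and $\widehat\Gamma_h(\mathbf{x})=(\widehat\gamma_1^h(\mathbf{x}),\ldots,\widehat\gamma_J^h(\mathbf{x}))$. For $1\le j,j'\le J$ set $\nu_{jj}^2=0$ and $\theta^{0}_{jj'}=\Psi\Big(\frac{\sigma_j^2+\sigma_{j'}^2+\nu_{jj'}^2}{C_0}\Big)(\sigma_j^2+\sigma_{j'}^2+\nu_{jj'}^2)$. Then, as $d\to\infty$: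 (a) for every $j$ and $i=1,\ldots,n_j$, $d^{-1}\widehat\Gamma_h(\mathbf{X}_{ji})\overset{P}{\to}\widetilde\Theta_j=(\widetilde\theta_{j1},\ldots,\widetilde\theta_{jJ})$, where $\widetilde\theta_{jj}=(1-1/n_j)\theta^{0}_{jj}$ and $\widetilde\theta_{jk}=\theta^0_{jk}$ for $k\ne j$; (b) for an observation $\mathbf{Z}\sim F_i$ independent of the samples, $d^{-1}\widehat\Gamma_h(\mathbf{Z})\overset{P}{\to}(\theta^0_{i1},\ldots,\theta^0_{iJ})$.
   Context: Assumption (A1): for all $1\le j,j'\le J$ and independent random vectors $\mathbf{X}\sim F_j$ and $\mathbf{Y},\mathbf{Z}\sim F_{j'}$ (with coordinates $X_i,Y_i,Z_i$), as $d\to\infty$, $\big|d^{-1}\sum_{i=1}^d(X_i-Y_i)(X_i-Z_i)-E\{d^{-1}\sum_{i=1}^d(X_i-Y_i)(X_i-Z_i)\}\big|\overset{P}{\to}0$ and $\big|d^{-1}\sum_{i=1}^d(X_i-Y_i)^2-E\{d^{-1}\sum_{i=1}^d(X_i-Y_i)^2\}\big|\overset{P}{\to}0$. Assumption (A2): for each $j$ there is a constant $\sigma_j^2$ with $d^{-1}\mathrm{trace}(\boldsymbol{\Sigma}_j)\to\sigma_j^2$, and for each $j\ne j'$ there is a constant $\nu_{jj'}^2$ with $d^{-1}\|\boldsymbol{\mu}_j-\boldsymbol{\mu}_{j'}\|^2\to\nu_{jj'}^2$, as $d\to\infty$. The sample sizes $n_j$ stay fixed as $d\to\infty$. *)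

theory Defs
  imports "HOL-Probability.Probability"
begin

text \<open>Vectors in R^d are represented as extensional functions on the index set {..<d},
  i.e. elements of the space of the product measure below.\<close>

definition vecspace :: "nat \<Rightarrow> (nat \<Rightarrow> real) measure" where
  "vecspace d = PiM {..<d} (\<lambda>_. borel)"

definition sqdist :: "nat \<Rightarrow> (nat \<Rightarrow> real) \<Rightarrow> (nat \<Rightarrow> real) \<Rightarrow> real" where
  "sqdist d x y = (\<Sum>k<d. (x k - y k)^2)"

definition conv_prob :: "(nat \<Rightarrow> 'b measure) \<Rightarrow> (nat \<Rightarrow> 'b \<Rightarrow> real) \<Rightarrow> real \<Rightarrow> bool" where
  "conv_prob P Y c \<longleftrightarrow>
     (\<forall>e>0. ((\<lambda>d. measure (P d) {w \<in> space (P d). e < \<bar>Y d w - c\<bar>}) \<longlongrightarrow> 0) sequentially)"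

definition beta_hat :: "(real \<Rightarrow> real) \<Rightarrow> real \<Rightarrow> nat \<Rightarrow> nat \<Rightarrow> (nat \<Rightarrow> nat \<Rightarrow> real)
    \<Rightarrow> (nat \<Rightarrow> real) \<Rightarrow> real" where
  "beta_hat \<Psi> h d nj pts x =
     (1 / real nj) * (\<Sum>i=1..nj. \<Psi> (sqdist d x (pts i) / h^2) * sqdist d x (pts i))"

definition gamma_hat :: "(real \<Rightarrow> real) \<Rightarrow> real \<Rightarrow> nat \<Rightarrow> nat \<Rightarrow> (nat \<Rightarrow> nat \<Rightarrow> real)
    \<Rightarrow> (nat \<Rightarrow> real) \<Rightarrow> real" where
  "gamma_hat \<Psi> h d nj pts x =
     (if h > 1 then beta_hat \<Psi> h d nj pts x else beta_hat \<Psi> h d nj pts x / h ^ (d + 2))"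

definition theta0 :: "(real \<Rightarrow> real) \<Rightarrow> real \<Rightarrow> (nat \<Rightarrow> real) \<Rightarrow> (nat \<Rightarrow> nat \<Rightarrow> real)
    \<Rightarrow> nat \<Rightarrow> nat \<Rightarrow> real" where
  "theta0 \<Psi> C0 sigma2 nu2 j j' =
     (let s = sigma2 j + sigma2 j' + (if j = j' then 0 else nu2 j j') in \<Psi> (s / C0) * s)"

definition mean_vec :: "(nat \<Rightarrow> real) measure \<Rightarrow> nat \<Rightarrow> nat \<Rightarrow> real" where
  "mean_vec F d k = (\<integral>x. x k \<partial>F)"

definition trace_cov :: "(nat \<Rightarrow> real) measure \<Rightarrow> nat \<Rightarrow> real" where
  "trace_cov F d = (\<Sum>k<d. (\<integral>x. (x k - mean_vec F d k)^2 \<partial>F))"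

end

theory Submission imports Defs begin


lemma conv_probI_le:
  assumes P: "\<And>d. prob_space (P d)"
    and c: "conv_prob P U a"
    and U: "\<And>d. U d \<in> borel_measurable (P d)"
    and H: "\<And>e. e > 0 \<Longrightarrow> \<exists>\<delta>>0. eventually (\<lambda>d. \<forall>\<omega>\<in>space (P d). e < \<bar>Y d \<omega> - b\<bar> \<longrightarrow> \<delta> < \<bar>U d \<omega> - a\<bar>) sequentially"
  shows "conv_prob P Y b"
  unfolding conv_prob_def
proof (intro allI impI)
  fix e :: real assume "e > 0"
  then obtain \<delta> where d0: "\<delta> > 0" and ev: "eventually (\<lambda>d. \<forall>\<omega>\<in>space (P d). e < \<bar>Y d \<omega> - b\<bar> \<longrightarrow> \<delta> < \<bar>U d \<omega> - a\<bar>) sequentially"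
    using H by blast
  have lim: "((\<lambda>d. measure (P d) {w \<in> space (P d). \<delta> < \<bar>U d w - a\<bar>}) \<longlongrightarrow> 0) sequentially"
    using c d0 unfolding conv_prob_def by blast
  show "((\<lambda>d. measure (P d) {w \<in> space (P d). e < \<bar>Y d w - b\<bar>}) \<longlongrightarrow> 0) sequentially"
  proof (rule tendsto_sandwich[OF _ _ tendsto_const lim])
    show "\<forall>\<^sub>F d in sequentially. 0 \<le> measure (P d) {w \<in> space (P d). e < \<bar>Y d w - b\<bar>}"
      by simp
    show "\<forall>\<^sub>F d in sequentially. measure (P d) {w \<in> space (P d). e < \<bar>Y d w - b\<bar>} \<le> measure (P d) {w \<in> space (P d). \<delta> < \<bar>U d w - a\<bar>}"
      using ev
    proof eventually_elim
      case (elim d)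
      interpret prob_space "P d" by (rule P)
      have m: "{w \<in> space (P d). \<delta> < \<bar>U d w - a\<bar>} \<in> sets (P d)"
        using U[of d] by measurable
      show ?case using elim by (intro finite_measure_mono[OF _ m]) auto
    qed
  qed
qed

lemma conv_prob_add:
  assumes P: "\<And>d. prob_space (P d)"
    and Y: "\<And>d. Y d \<in> borel_measurable (P d)" and Z: "\<And>d. Z d \<in> borel_measurable (P d)"
    and cY: "conv_prob P Y a" and cZ: "conv_prob P Z b"
  shows "conv_prob P (\<lambda>d \<omega>. Y d \<omega> + Z d \<omega>) (a + b)"
  unfolding conv_prob_def
proof (intro allI impI)
  fix e :: real assume e: "e > 0"
  have l1: "((\<lambda>d. measure (P d) {w \<in> space (P d). e/2 < \<bar>Y d w - a\<bar>}) \<longlongrightarrow> 0) sequentially"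
    using cY e unfolding conv_prob_def by (meson half_gt_zero)
  have l2: "((\<lambda>d. measure (P d) {w \<in> space (P d). e/2 < \<bar>Z d w - b\<bar>}) \<longlongrightarrow> 0) sequentially"
    using cZ e unfolding conv_prob_def by (meson half_gt_zero)
  show "((\<lambda>d. measure (P d) {w \<in> space (P d). e < \<bar>Y d w + Z d w - (a + b)\<bar>}) \<longlongrightarrow> 0) sequentially"
  proof (rule tendsto_sandwich[OF _ _ tendsto_const tendsto_add_zero[OF l1 l2]])
    show "\<forall>\<^sub>F d in sequentially. 0 \<le> measure (P d) {w \<in> space (P d). e < \<bar>Y d w + Z d w - (a + b)\<bar>}"
      by simp
    show "\<forall>\<^sub>F d in sequentially. measure (P d) {w \<in> space (P d). e < \<bar>Y d w + Z d w - (a + b)\<bar>}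
       \<le> measure (P d) {w \<in> space (P d). e/2 < \<bar>Y d w - a\<bar>} + measure (P d) {w \<in> space (P d). e/2 < \<bar>Z d w - b\<bar>}"
    proof (rule always_eventually, intro allI)
      fix d
      interpret prob_space "P d" by (rule P)
      have m1: "{w \<in> space (P d). e/2 < \<bar>Y d w - a\<bar>} \<in> sets (P d)"
        using Y[of d] by measurable
      have m2: "{w \<in> space (P d). e/2 < \<bar>Z d w - b\<bar>} \<in> sets (P d)"
        using Z[of d] by measurable
      have "measure (P d) {w \<in> space (P d). e < \<bar>Y d w + Z d w - (a + b)\<bar>}
          \<le> measure (P d) ({w \<in> space (P d). e/2 < \<bar>Y d w - a\<bar>} \<union> {w \<in> space (P d). e/2 < \<bar>Z d w - b\<bar>})"
      proof (intro finite_measure_mono)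
        show "{w \<in> space (P d). e < \<bar>Y d w + Z d w - (a + b)\<bar>}
         \<subseteq> {w \<in> space (P d). e / 2 < \<bar>Y d w - a\<bar>} \<union> {w \<in> space (P d). e / 2 < \<bar>Z d w - b\<bar>}"
        proof
          fix w assume "w \<in> {w \<in> space (P d). e < \<bar>Y d w + Z d w - (a + b)\<bar>}"
          then show "w \<in> {w \<in> space (P d). e / 2 < \<bar>Y d w - a\<bar>} \<union> {w \<in> space (P d). e / 2 < \<bar>Z d w - b\<bar>}"
            by (simp only: mem_Collect_eq Un_iff) (smt (verit, best) abs_triangle_ineq field_sum_of_halves)
        qed
        show "{w \<in> space (P d). e / 2 < \<bar>Y d w - a\<bar>} \<union> {w \<in> space (P d). e / 2 < \<bar>Z d w - b\<bar>} \<in> events"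
          using m1 m2 by blast
      qed
      also have "\<dots> \<le> measure (P d) {w \<in> space (P d). e/2 < \<bar>Y d w - a\<bar>} + measure (P d) {w \<in> space (P d). e/2 < \<bar>Z d w - b\<bar>}"
        by (rule measure_Un_le[OF m1 m2])
      finally show "measure (P d) {w \<in> space (P d). e < \<bar>Y d w + Z d w - (a + b)\<bar>}
       \<le> measure (P d) {w \<in> space (P d). e/2 < \<bar>Y d w - a\<bar>} + measure (P d) {w \<in> space (P d). e/2 < \<bar>Z d w - b\<bar>}" .
    qed
  qed
qed

lemma conv_prob_const: "conv_prob P (\<lambda>d \<omega>. c) c"
  unfolding conv_prob_def by simp

lemma conv_prob_sum:
  assumes P: "\<And>d. prob_space (P d)" and L: "finite L"
    and Y: "\<And>l d. l \<in> L \<Longrightarrow> Y l d \<in> borel_measurable (P d)"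
    and c: "\<And>l. l \<in> L \<Longrightarrow> conv_prob P (Y l) (c l)"
  shows "conv_prob P (\<lambda>d \<omega>. \<Sum>l\<in>L. Y l d \<omega>) (\<Sum>l\<in>L. c l)"
  using L Y c
proof (induction L rule: finite_induct)
  case empty
  then show ?case using conv_prob_const[of P 0] by simp
next
  case (insert x F)
  have "conv_prob P (\<lambda>d \<omega>. Y x d \<omega> + (\<Sum>l\<in>F. Y l d \<omega>)) (c x + (\<Sum>l\<in>F. c l))"
    by (rule conv_prob_add[OF P]) (use insert in auto)
  then show ?case using insert by simp
qed

lemma conv_prob_cong_ev:
  assumes "eventually (\<lambda>d. \<forall>\<omega>\<in>space (P d). Y d \<omega> = Y' d \<omega>) sequentially"
    and "conv_prob P Y c"
  shows "conv_prob P Y' c"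
  unfolding conv_prob_def
proof (intro allI impI)
  fix e :: real assume "e > 0"
  then have l: "((\<lambda>d. measure (P d) {w \<in> space (P d). e < \<bar>Y d w - c\<bar>}) \<longlongrightarrow> 0) sequentially"
    using assms(2) unfolding conv_prob_def by blast
  show "((\<lambda>d. measure (P d) {w \<in> space (P d). e < \<bar>Y' d w - c\<bar>}) \<longlongrightarrow> 0) sequentially"
  proof (rule tendsto_cong[THEN iffD1, OF _ l])
    show "\<forall>\<^sub>F x in sequentially. measure (P x) {w \<in> space (P x). e < \<bar>Y x w - c\<bar>} = measure (P x) {w \<in> space (P x). e < \<bar>Y' x w - c\<bar>}"
      using assms(1) by eventually_elim (metis (no_types, lifting) Collect_cong)
  qed
qed

lemma conv_prob_cont1:
  assumes P: "\<And>d. prob_space (P d)"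
    and U: "\<And>d. U d \<in> borel_measurable (P d)"
    and c: "conv_prob P U a" and t: "(t \<longlongrightarrow> (c0::real)) sequentially"
    and g: "isCont (\<lambda>p. g (fst p) (snd p)) (a, c0)"
  shows "conv_prob P (\<lambda>d \<omega>. g (U d \<omega>) (t d)) (g a c0)"
proof (rule conv_probI_le[OF P c U])
  fix e :: real assume e: "e > 0"
  obtain \<delta> where d0: "\<delta> > 0" and d: "\<And>p. dist p (a, c0) < \<delta> \<Longrightarrow> dist (g (fst p) (snd p)) (g a c0) < e"
    using g e unfolding continuous_at_eps_delta by fastforce
  have ev: "eventually (\<lambda>d. dist (t d) c0 < \<delta>/2) sequentially"
    using t d0 unfolding tendsto_iff by (meson half_gt_zero)
  show "\<exists>\<delta>>0. eventually (\<lambda>d. \<forall>\<omega>\<in>space (P d). e < \<bar>g (U d \<omega>) (t d) - g a c0\<bar> \<longrightarrow> \<delta> < \<bar>U d \<omega> - a\<bar>) sequentially"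
  proof (intro exI[of _ "\<delta>/2"] conjI)
    show "\<delta>/2 > 0" using d0 by simp
    show "eventually (\<lambda>d. \<forall>\<omega>\<in>space (P d). e < \<bar>g (U d \<omega>) (t d) - g a c0\<bar> \<longrightarrow> \<delta>/2 < \<bar>U d \<omega> - a\<bar>) sequentially"
      using ev
    proof eventually_elim
      case (elim d)
      show ?case
      proof (intro ballI impI)
        fix \<omega> assume h: "e < \<bar>g (U d \<omega>) (t d) - g a c0\<bar>"
        show "\<delta>/2 < \<bar>U d \<omega> - a\<bar>"
        proof (rule ccontr)
          assume "\<not> \<delta>/2 < \<bar>U d \<omega> - a\<bar>"
          then have "dist (U d \<omega>) a \<le> \<delta>/2" by (simp add: dist_real_def)
          then have "dist (U d \<omega>, t d) (a, c0) < \<delta>"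
            using elim sqrt_sum_squares_le_sum_abs[of "dist (U d \<omega>) a" "dist (t d) c0"]
            by (simp add: dist_Pair_Pair)
          then have "dist (g (U d \<omega>) (t d)) (g a c0) < e" using d by fastforce
          then show False using h by (simp add: dist_real_def)
        qed
      qed
    qed
  qed
qed



lemma (in prob_space) indep_vars_pair:
  assumes ind: "indep_vars M' X I" and ab: "a \<in> I" "b \<in> I" "a \<noteq> b"
  shows "indep_var (M' a) (X a) (M' b) (X b)"
proof -
  have "indep_var (PiM {a} M') (\<lambda>\<omega>. restrict (\<lambda>i. X i \<omega>) {a}) (PiM {b} M') (\<lambda>\<omega>. restrict (\<lambda>i. X i \<omega>) {b})"
    by (rule indep_var_restrict[OF ind]) (use ab in auto)
  then have "indep_var (M' a) ((\<lambda>f. f a) \<circ> (\<lambda>\<omega>. restrict (\<lambda>i. X i \<omega>) {a})) (M' b) ((\<lambda>f. f b) \<circ> (\<lambda>\<omega>. restrict (\<lambda>i. X i \<omega>) {b}))"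
    by (rule indep_var_compose) (auto intro: measurable_component_singleton)
  also have "((\<lambda>f. f a) \<circ> (\<lambda>\<omega>. restrict (\<lambda>i. X i \<omega>) {a})) = X a" by auto
  also have "((\<lambda>f. f b) \<circ> (\<lambda>\<omega>. restrict (\<lambda>i. X i \<omega>) {b})) = X b" by auto
  finally show ?thesis .
qed

lemma (in prob_space) sq_diff_indep:
  fixes a b :: "'a \<Rightarrow> real"
  assumes ia: "integrable M a" and ia2: "integrable M (\<lambda>x. (a x)^2)"
    and ib: "integrable M b" and ib2: "integrable M (\<lambda>x. (b x)^2)"
    and ind: "indep_var borel a borel b"
  shows "integrable M (\<lambda>x. (a x - b x)^2)"
    and "expectation (\<lambda>x. (a x - b x)^2) = variance a + variance b + (expectation a - expectation b)^2"
proof -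
  have iab: "integrable M (\<lambda>x. a x * b x)" by (rule indep_var_integrable[OF ind ia ib])
  have eab: "expectation (\<lambda>x. a x * b x) = expectation a * expectation b"
    by (rule indep_var_lebesgue_integral[OF ind ia ib])
  have eq: "(\<lambda>x. (a x - b x)^2) = (\<lambda>x. (a x)^2 - 2 * (a x * b x) + (b x)^2)"
    by (auto simp: power2_eq_square algebra_simps)
  show "integrable M (\<lambda>x. (a x - b x)^2)" unfolding eq using ia2 ib2 iab by auto
  have "expectation (\<lambda>x. (a x - b x)^2) = expectation (\<lambda>x. (a x)^2) - 2 * expectation (\<lambda>x. a x * b x) + expectation (\<lambda>x. (b x)^2)"
    unfolding eq using ia2 ib2 iab by simp
  then show "expectation (\<lambda>x. (a x - b x)^2) = variance a + variance b + (expectation a - expectation b)^2"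
    using variance_eq[OF ia ia2] variance_eq[OF ib ib2] eab by (simp add: power2_eq_square algebra_simps)
qed

lemma (in prob_space) integral_identity:
  fixes X Y :: "'a \<Rightarrow> nat \<Rightarrow> real"
  assumes X: "X \<in> measurable M (vecspace d)" and Y: "Y \<in> measurable M (vecspace d)"
    and ind: "indep_var (vecspace d) X (vecspace d) Y"
    and dX: "distr M (vecspace d) X = A" and dY: "distr M (vecspace d) Y = B"
    and iA: "\<forall>k<d. integrable A (\<lambda>x. (x k)^2)" and iB: "\<forall>k<d. integrable B (\<lambda>x. (x k)^2)"
  shows "(\<integral>(x, y). (1 / real d) * (\<Sum>k<d. (x k - y k)^2) \<partial>(A \<Otimes>\<^sub>M B))
     = (trace_cov A d + trace_cov B d + (\<Sum>k<d. (mean_vec A d k - mean_vec B d k)^2)) / real d"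
proof -
  have AB: "A \<Otimes>\<^sub>M B = distr M (vecspace d \<Otimes>\<^sub>M vecspace d) (\<lambda>\<omega>. (X \<omega>, Y \<omega>))"
    using ind unfolding indep_var_distribution_eq dX dY by simp
  have XY: "(\<lambda>\<omega>. (X \<omega>, Y \<omega>)) \<in> measurable M (vecspace d \<Otimes>\<^sub>M vecspace d)"
    using X Y by measurable
  have fm: "(\<lambda>(x, y). (1 / real d) * (\<Sum>k<d. (x k - y k)^2)) \<in> borel_measurable (vecspace d \<Otimes>\<^sub>M vecspace d)"
    unfolding vecspace_def by measurable
  have comp: "k < d \<Longrightarrow> (\<lambda>\<omega>. Z \<omega> k) \<in> borel_measurable M" if "Z \<in> measurable M (vecspace d)" for Z k
    using measurable_compose[OF that[unfolded vecspace_def] measurable_component_singleton[of k "{..<d}" "\<lambda>_. borel"]]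
    by simp
  have per: "integrable M (\<lambda>\<omega>. (X \<omega> k - Y \<omega> k)^2) \<and>
     expectation (\<lambda>\<omega>. (X \<omega> k - Y \<omega> k)^2) =
       (\<integral>x. (x k - mean_vec A d k)^2 \<partial>A) + (\<integral>x. (x k - mean_vec B d k)^2 \<partial>B) + (mean_vec A d k - mean_vec B d k)^2"
    if k: "k < d" for k
  proof -
    have ma: "(\<lambda>\<omega>. X \<omega> k) \<in> borel_measurable M" using comp[OF X k] .
    have mb: "(\<lambda>\<omega>. Y \<omega> k) \<in> borel_measurable M" using comp[OF Y k] .
    have cm: "(\<lambda>x. x k) \<in> borel_measurable (vecspace d)"
      unfolding vecspace_def using k by (intro measurable_component_singleton) auto
    have ia2: "integrable M (\<lambda>\<omega>. (X \<omega> k)^2)"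
      using iA k integrable_distr_eq[OF X, of "\<lambda>x. (x k)^2"] cm dX by simp
    have ib2: "integrable M (\<lambda>\<omega>. (Y \<omega> k)^2)"
      using iB k integrable_distr_eq[OF Y, of "\<lambda>x. (x k)^2"] cm dY by simp
    have ia: "integrable M (\<lambda>\<omega>. X \<omega> k)" by (rule square_integrable_imp_integrable[OF ma ia2])
    have ib: "integrable M (\<lambda>\<omega>. Y \<omega> k)" by (rule square_integrable_imp_integrable[OF mb ib2])
    have ind2: "indep_var borel ((\<lambda>x. x k) \<circ> X) borel ((\<lambda>x. x k) \<circ> Y)"
      by (rule indep_var_compose[OF ind cm cm])
    have ind3: "indep_var borel (\<lambda>\<omega>. X \<omega> k) borel (\<lambda>\<omega>. Y \<omega> k)"
      using ind2 by (simp add: comp_def)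
    have mA: "mean_vec A d k = expectation (\<lambda>\<omega>. X \<omega> k)"
      unfolding mean_vec_def dX[symmetric] by (rule integral_distr[OF X cm])
    have mB: "mean_vec B d k = expectation (\<lambda>\<omega>. Y \<omega> k)"
      unfolding mean_vec_def dY[symmetric] by (rule integral_distr[OF Y cm])
    have vA: "(\<integral>x. (x k - mean_vec A d k)^2 \<partial>A) = variance (\<lambda>\<omega>. X \<omega> k)"
    proof -
      have "(\<integral>x. (x k - mean_vec A d k)^2 \<partial>A) = expectation (\<lambda>\<omega>. (X \<omega> k - mean_vec A d k)^2)"
        unfolding dX[symmetric] by (rule integral_distr[OF X]) (use cm in auto)
      then show ?thesis using mA by simp
    qed
    have vB: "(\<integral>x. (x k - mean_vec B d k)^2 \<partial>B) = variance (\<lambda>\<omega>. Y \<omega> k)"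
    proof -
      have "(\<integral>x. (x k - mean_vec B d k)^2 \<partial>B) = expectation (\<lambda>\<omega>. (Y \<omega> k - mean_vec B d k)^2)"
        unfolding dY[symmetric] by (rule integral_distr[OF Y]) (use cm in auto)
      then show ?thesis using mB by simp
    qed
    show ?thesis
      using sq_diff_indep[OF ia ia2 ib ib2 ind3] vA vB mA mB by simp
  qed
  have "(\<integral>(x, y). (1 / real d) * (\<Sum>k<d. (x k - y k)^2) \<partial>(A \<Otimes>\<^sub>M B))
      = (\<integral>\<omega>. (1 / real d) * (\<Sum>k<d. (X \<omega> k - Y \<omega> k)^2) \<partial>M)"
    unfolding AB by (subst integral_distr[OF XY fm]) simp
  also have "\<dots> = (1 / real d) * (\<Sum>k<d. expectation (\<lambda>\<omega>. (X \<omega> k - Y \<omega> k)^2))"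
    using per by (simp add: integral_sum)
  also have "\<dots> = (1 / real d) * (\<Sum>k<d. (\<integral>x. (x k - mean_vec A d k)^2 \<partial>A) + (\<integral>x. (x k - mean_vec B d k)^2 \<partial>B) + (mean_vec A d k - mean_vec B d k)^2)"
    using per by simp
  also have "\<dots> = (trace_cov A d + trace_cov B d + (\<Sum>k<d. (mean_vec A d k - mean_vec B d k)^2)) / real d"
    unfolding trace_cov_def by (simp add: sum.distrib)
  finally show ?thesis .
qed



lemma pair_conv:
  fixes M :: "nat \<Rightarrow> 'a measure" and X Y :: "nat \<Rightarrow> 'a \<Rightarrow> nat \<Rightarrow> real"
    and A B :: "nat \<Rightarrow> (nat \<Rightarrow> real) measure" and E :: "nat \<Rightarrow> real"
  assumes M: "\<And>d. prob_space (M d)"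
    and X: "\<And>d. X d \<in> measurable (M d) (vecspace d)" and Y: "\<And>d. Y d \<in> measurable (M d) (vecspace d)"
    and D: "\<And>d. distr (M d) (vecspace d \<Otimes>\<^sub>M vecspace d) (\<lambda>\<omega>. (X d \<omega>, Y d \<omega>)) = A d \<Otimes>\<^sub>M B d"
    and C: "conv_prob (\<lambda>d. A d \<Otimes>\<^sub>M B d) (\<lambda>d (x, y). (1 / real d) * (\<Sum>k<d. (x k - y k)^2) - E d) 0"
    and E: "(E \<longlongrightarrow> s) sequentially"
  shows "conv_prob M (\<lambda>d \<omega>. sqdist d (X d \<omega>) (Y d \<omega>) / real d) s"
  unfolding conv_prob_def
proof (intro allI impI)
  fix e :: real assume e: "e > 0"
  have e2: "e/2 > 0" using e by simp
  have l: "((\<lambda>d. measure (A d \<Otimes>\<^sub>M B d) {w \<in> space (A d \<Otimes>\<^sub>M B d).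
       e/2 < \<bar>(case w of (x, y) \<Rightarrow> (1 / real d) * (\<Sum>k<d. (x k - y k)^2) - E d) - 0\<bar>}) \<longlongrightarrow> 0) sequentially"
    using C e2 unfolding conv_prob_def by blast
  have ev: "eventually (\<lambda>d. dist (E d) s < e/2) sequentially"
    using E e2 unfolding tendsto_iff by blast
  show "((\<lambda>d. measure (M d) {w \<in> space (M d). e < \<bar>sqdist d (X d w) (Y d w) / real d - s\<bar>}) \<longlongrightarrow> 0) sequentially"
  proof (rule tendsto_sandwich[OF _ _ tendsto_const l])
    show "\<forall>\<^sub>F d in sequentially. 0 \<le> measure (M d) {w \<in> space (M d). e < \<bar>sqdist d (X d w) (Y d w) / real d - s\<bar>}"
      by simp
    show "\<forall>\<^sub>F d in sequentially. measure (M d) {w \<in> space (M d). e < \<bar>sqdist d (X d w) (Y d w) / real d - s\<bar>}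
       \<le> measure (A d \<Otimes>\<^sub>M B d) {w \<in> space (A d \<Otimes>\<^sub>M B d).
       e/2 < \<bar>(case w of (x, y) \<Rightarrow> (1 / real d) * (\<Sum>k<d. (x k - y k)^2) - E d) - 0\<bar>}"
      using ev
    proof eventually_elim
      case (elim d)
      interpret prob_space "M d" by (rule M)
      let ?S = "{w \<in> space (vecspace d \<Otimes>\<^sub>M vecspace d).
           e/2 < \<bar>(case w of (x, y) \<Rightarrow> (1 / real d) * (\<Sum>k<d. (x k - y k)^2) - E d) - 0\<bar>}"
      have XY: "(\<lambda>\<omega>. (X d \<omega>, Y d \<omega>)) \<in> measurable (M d) (vecspace d \<Otimes>\<^sub>M vecspace d)"
        using X Y by measurable
      have fm: "(\<lambda>(x, y). (1 / real d) * (\<Sum>k<d. (x k - y k)^2)) \<in> borel_measurable (vecspace d \<Otimes>\<^sub>M vecspace d)"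
        unfolding vecspace_def by measurable
      have Sm: "?S \<in> sets (vecspace d \<Otimes>\<^sub>M vecspace d)"
        using fm by measurable
      have "measure (A d \<Otimes>\<^sub>M B d) {w \<in> space (A d \<Otimes>\<^sub>M B d).
           e/2 < \<bar>(case w of (x, y) \<Rightarrow> (1 / real d) * (\<Sum>k<d. (x k - y k)^2) - E d) - 0\<bar>}
          = measure (distr (M d) (vecspace d \<Otimes>\<^sub>M vecspace d) (\<lambda>\<omega>. (X d \<omega>, Y d \<omega>))) ?S"
        unfolding D[symmetric] by simp
      also have "\<dots> = measure (M d) ((\<lambda>\<omega>. (X d \<omega>, Y d \<omega>)) -` ?S \<inter> space (M d))"
        by (rule measure_distr[OF XY Sm])
      also have "(\<lambda>\<omega>. (X d \<omega>, Y d \<omega>)) -` ?S \<inter> space (M d)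
          = {w \<in> space (M d). e/2 < \<bar>sqdist d (X d w) (Y d w) / real d - E d\<bar>}"
        using measurable_space[OF XY] by (auto simp: sqdist_def)
      finally have eq: "measure (A d \<Otimes>\<^sub>M B d) {w \<in> space (A d \<Otimes>\<^sub>M B d).
           e/2 < \<bar>(case w of (x, y) \<Rightarrow> (1 / real d) * (\<Sum>k<d. (x k - y k)^2) - E d) - 0\<bar>}
          = measure (M d) {w \<in> space (M d). e/2 < \<bar>sqdist d (X d w) (Y d w) / real d - E d\<bar>}" .
      have m2: "{w \<in> space (M d). e/2 < \<bar>sqdist d (X d w) (Y d w) / real d - E d\<bar>} \<in> sets (M d)"
      proof -
        have "{w \<in> space (M d). e/2 < \<bar>sqdist d (X d w) (Y d w) / real d - E d\<bar>} = (\<lambda>\<omega>. (X d \<omega>, Y d \<omega>)) -` ?S \<inter> space (M d)"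
          using measurable_space[OF XY] by (auto simp: sqdist_def)
        also have "\<dots> \<in> sets (M d)" using XY Sm by (rule measurable_sets)
        finally show ?thesis .
      qed
      show ?case unfolding eq
      proof (rule finite_measure_mono[OF _ m2], safe)
        fix w assume "w \<in> space (M d)" "e < \<bar>sqdist d (X d w) (Y d w) / real d - s\<bar>"
        then show "e/2 < \<bar>sqdist d (X d w) (Y d w) / real d - E d\<bar>"
          using elim unfolding dist_real_def by (smt (verit) field_sum_of_halves)
      qed
    qed
  qed
qed



lemma sqdist_meas:
  assumes P: "P \<in> measurable M (vecspace d)" and Q: "Q \<in> measurable M (vecspace d)"
  shows "(\<lambda>\<omega>. sqdist d (P \<omega>) (Q \<omega>)) \<in> borel_measurable M"
proof -
  have comp: "k < d \<Longrightarrow> (\<lambda>\<omega>. Z \<omega> k) \<in> borel_measurable M" if "Z \<in> measurable M (vecspace d)" for Z k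
    using measurable_compose[OF that[unfolded vecspace_def] measurable_component_singleton[of k "{..<d}" "\<lambda>_. borel"]]
    by simp
  show ?thesis unfolding sqdist_def
    by (intro borel_measurable_sum borel_measurable_power borel_measurable_diff) (auto intro: comp P Q)
qed

lemma gamma_conv:
  fixes M :: "nat \<Rightarrow> 'a measure" and Pt :: "nat \<Rightarrow> 'a \<Rightarrow> nat \<Rightarrow> real"
    and Xs :: "nat \<Rightarrow> nat \<Rightarrow> 'a \<Rightarrow> nat \<Rightarrow> real" and c :: "nat \<Rightarrow> real" and N :: nat
    and \<Psi> :: "real \<Rightarrow> real" and h :: "nat \<Rightarrow> real" and C0 :: real
  assumes M: "\<And>d. prob_space (M d)"
    and Pm: "\<And>d. Pt d \<in> measurable (M d) (vecspace d)"
    and Xm: "\<And>d l. l \<in> {1..N} \<Longrightarrow> Xs d l \<in> measurable (M d) (vecspace d)"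
    and conv: "\<And>l. l \<in> {1..N} \<Longrightarrow> conv_prob M (\<lambda>d \<omega>. sqdist d (Pt d \<omega>) (Xs d l \<omega>) / real d) (c l)"
    and cnn: "\<And>l. l \<in> {1..N} \<Longrightarrow> c l \<ge> 0"
    and Psi_cont: "continuous_on {0..} \<Psi>"
    and h_pos: "\<forall>d. h d > 0"
    and C0: "C0 > 0"
    and h_lim: "((\<lambda>d. (h d)^2 / real d) \<longlongrightarrow> C0) sequentially"
  shows "conv_prob M (\<lambda>d \<omega>. gamma_hat \<Psi> (h d) d N (\<lambda>l. Xs d l \<omega>) (Pt d \<omega>) / real d)
           ((1 / real N) * (\<Sum>l=1..N. \<Psi> (c l / C0) * c l))"
proof -
  define \<Psi>' where "\<Psi>' = (\<lambda>x. \<Psi> (max 0 x))"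
  have Pc: "continuous_on UNIV \<Psi>'"
    unfolding \<Psi>'_def by (rule continuous_on_compose2[OF Psi_cont]) (auto intro!: continuous_intros)
  have Pc': "isCont \<Psi>' x" for x
    using Pc continuous_on_eq_continuous_at[of UNIV \<Psi>'] by auto
  define g where "g = (\<lambda>u t. \<Psi>' (u * t) * u * (1 / real N))"
  define U where "U = (\<lambda>l d \<omega>. sqdist d (Pt d \<omega>) (Xs d l \<omega>) / real d)"
  define t where "t = (\<lambda>d. real d / (h d)^2)"
  have tlim: "(t \<longlongrightarrow> 1 / C0) sequentially"
  proof -
    have "((\<lambda>d. inverse ((h d)^2 / real d)) \<longlongrightarrow> inverse C0) sequentially"
      by (rule tendsto_inverse[OF h_lim]) (use C0 in simp)
    then show ?thesis unfolding t_def by (simp add: inverse_eq_divide)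
  qed
  have Um: "U l d \<in> borel_measurable (M d)" if "l \<in> {1..N}" for l d
    unfolding U_def using sqdist_meas[OF Pm Xm[OF that]] by measurable
  have gm: "(\<lambda>\<omega>. g (U l d \<omega>) (t d)) \<in> borel_measurable (M d)" if "l \<in> {1..N}" for l d
    unfolding g_def using borel_measurable_continuous_on[OF Pc, of "\<lambda>\<omega>. U l d \<omega> * t d" "M d"] Um[OF that]
    by measurable
  have gc: "isCont (\<lambda>p. g (fst p) (snd p)) x" for x
  proof -
    have "isCont (\<lambda>p. \<Psi>' (fst p * snd p)) x"
      by (rule isCont_o2[OF _ Pc']) (intro continuous_intros)
    then show ?thesis unfolding g_def by (intro continuous_intros)
  qed
  have each: "conv_prob M (\<lambda>d \<omega>. g (U l d \<omega>) (t d)) (g (c l) (1 / C0))" if "l \<in> {1..N}" for l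
    by (rule conv_prob_cont1[OF M Um[OF that] _ tlim gc]) (use conv[OF that] in \<open>simp add: U_def\<close>)
  have sum: "conv_prob M (\<lambda>d \<omega>. \<Sum>l\<in>{1..N}. g (U l d \<omega>) (t d)) (\<Sum>l\<in>{1..N}. g (c l) (1 / C0))"
    by (rule conv_prob_sum[OF M]) (use gm each in auto)
  have tgt: "(\<Sum>l\<in>{1..N}. g (c l) (1 / C0)) = (1 / real N) * (\<Sum>l=1..N. \<Psi> (c l / C0) * c l)"
    unfolding g_def \<Psi>'_def sum_distrib_left
    by (intro sum.cong refl) (use cnn C0 in \<open>auto simp: max_def\<close>)
  have evh: "eventually (\<lambda>d. h d > 1 \<and> d > 0) sequentially"
  proof -
    have e1: "eventually (\<lambda>d. (h d)^2 / real d > C0 / 2) sequentially"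
      using h_lim C0 by (intro order_tendstoD(1)) auto
    have e2: "eventually (\<lambda>d. real d > 2 / C0) sequentially"
      by (rule eventually_sequentiallyI[of "nat \<lceil>2 / C0\<rceil> + 1"]) linarith
    show ?thesis using e1 e2
    proof eventually_elim
      case (elim d)
      have dpos: "real d > 0" using elim C0 by (smt (verit) divide_pos_pos)
      have "(h d)^2 > C0 / 2 * real d" using elim dpos by (simp add: field_simps)
      moreover have "C0 / 2 * real d > 1" using elim C0 by (simp add: field_simps)
      ultimately have "(h d)^2 > 1" by linarith
      then have "h d > 1" using h_pos by (smt (verit) one_power2 power_mono)
      then show ?case using dpos by simp
    qed
  qed
  show ?thesis
    unfolding tgt[symmetric]
  proof (rule conv_prob_cong_ev[OF _ sum])
    show "\<forall>\<^sub>F d in sequentially. \<forall>\<omega>\<in>space (M d). (\<Sum>l\<in>{1..N}. g (U l d \<omega>) (t d)) =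
        gamma_hat \<Psi> (h d) d N (\<lambda>l. Xs d l \<omega>) (Pt d \<omega>) / real d"
      using evh
    proof eventually_elim
      case (elim d)
      show ?case
      proof
        fix \<omega>
        have "(\<Sum>l\<in>{1..N}. g (U l d \<omega>) (t d)) = (\<Sum>l\<in>{1..N}. \<Psi> (sqdist d (Pt d \<omega>) (Xs d l \<omega>) / (h d)^2) * sqdist d (Pt d \<omega>) (Xs d l \<omega>) / real N / real d)"
        proof (intro sum.cong refl)
          fix l
          have nn: "sqdist d (Pt d \<omega>) (Xs d l \<omega>) \<ge> 0" unfolding sqdist_def by (simp add: sum_nonneg)
          have "sqdist d (Pt d \<omega>) (Xs d l \<omega>) / real d * (real d / (h d)^2) = sqdist d (Pt d \<omega>) (Xs d l \<omega>) / (h d)^2"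
            using elim by simp
          then show "g (U l d \<omega>) (t d) = \<Psi> (sqdist d (Pt d \<omega>) (Xs d l \<omega>) / (h d)^2) * sqdist d (Pt d \<omega>) (Xs d l \<omega>) / real N / real d"
            unfolding g_def U_def t_def \<Psi>'_def using nn h_pos by (simp add: max_def)
        qed
        also have "\<dots> = gamma_hat \<Psi> (h d) d N (\<lambda>l. Xs d l \<omega>) (Pt d \<omega>) / real d"
          unfolding gamma_hat_def beta_hat_def using elim
          by (simp add: sum_divide_distrib sum_distrib_left)
        finally show "(\<Sum>l\<in>{1..N}. g (U l d \<omega>) (t d)) = gamma_hat \<Psi> (h d) d N (\<lambda>l. Xs d l \<omega>) (Pt d \<omega>) / real d" .
      qed
    qed
  qed
qed



theorem theorem4:
  fixes J :: nat and n :: "nat \<Rightarrow> nat"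
    and F :: "nat \<Rightarrow> nat \<Rightarrow> (nat \<Rightarrow> real) measure"
    and M :: "nat \<Rightarrow> 'a measure"
    and X :: "nat \<Rightarrow> nat \<Rightarrow> nat \<Rightarrow> 'a \<Rightarrow> (nat \<Rightarrow> real)"
    and \<Psi> :: "real \<Rightarrow> real" and h :: "nat \<Rightarrow> real" and C0 :: real
    and sigma2 :: "nat \<Rightarrow> real" and nu2 :: "nat \<Rightarrow> nat \<Rightarrow> real"
  assumes J: "J \<ge> 2"
    and n: "\<forall>j\<in>{1..J}. n j \<ge> 2"
    \<comment> \<open>distributions on R^d with finite second moments\<close>
    and F_prob: "\<forall>d. \<forall>j\<in>{1..J}. prob_space (F d j) \<and> sets (F d j) = sets (vecspace d)"
    and F_mom: "\<forall>d. \<forall>j\<in>{1..J}. \<forall>k<d. integrable (F d j) (\<lambda>x. (x k)^2)"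
    \<comment> \<open>(A1)\<close>
    and A1a: "\<forall>j\<in>{1..J}. \<forall>j'\<in>{1..J}.
       conv_prob (\<lambda>d. F d j \<Otimes>\<^sub>M (F d j' \<Otimes>\<^sub>M F d j'))
         (\<lambda>d (x, y, z). (1 / real d) * (\<Sum>k<d. (x k - y k) * (x k - z k))
             - (\<integral>(x', y', z'). (1 / real d) * (\<Sum>k<d. (x' k - y' k) * (x' k - z' k))
                  \<partial>(F d j \<Otimes>\<^sub>M (F d j' \<Otimes>\<^sub>M F d j')))) 0"
    and A1b: "\<forall>j\<in>{1..J}. \<forall>j'\<in>{1..J}.
       conv_prob (\<lambda>d. F d j \<Otimes>\<^sub>M F d j')
         (\<lambda>d (x, y). (1 / real d) * (\<Sum>k<d. (x k - y k)^2)
             - (\<integral>(x', y'). (1 / real d) * (\<Sum>k<d. (x' k - y' k)^2) \<partial>(F d j \<Otimes>\<^sub>M F d j'))) 0"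
    \<comment> \<open>(A2)\<close>
    and A2a: "\<forall>j\<in>{1..J}. ((\<lambda>d. trace_cov (F d j) d / real d) \<longlongrightarrow> sigma2 j) sequentially"
    and A2b: "\<forall>j\<in>{1..J}. \<forall>j'\<in>{1..J}. j \<noteq> j' \<longrightarrow>
       ((\<lambda>d. (\<Sum>k<d. (mean_vec (F d j) d k - mean_vec (F d j') d k)^2) / real d)
          \<longlongrightarrow> nu2 j j') sequentially"
    \<comment> \<open>independent iid samples\<close>
    and M: "\<forall>d. prob_space (M d)"
    and X_meas: "\<forall>d. \<forall>j\<in>{1..J}. \<forall>i\<in>{1..n j}. X d j i \<in> measurable (M d) (vecspace d)"
    and X_dist: "\<forall>d. \<forall>j\<in>{1..J}. \<forall>i\<in>{1..n j}. distr (M d) (vecspace d) (X d j i) = F d j"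
    and X_indep: "\<forall>d. prob_space.indep_vars (M d) (\<lambda>_. vecspace d) (\<lambda>(j, i). X d j i)
                        {(j, i). j \<in> {1..J} \<and> i \<in> {1..n j}}"
    \<comment> \<open>kernel function and bandwidth\<close>
    and Psi_cont: "continuous_on {0..} \<Psi>"
    and Psi_nonneg: "\<forall>t\<ge>0. \<Psi> t \<ge> 0"
    and Psi_decr: "\<forall>s t. 0 \<le> s \<longrightarrow> s \<le> t \<longrightarrow> \<Psi> t \<le> \<Psi> s"
    and h_pos: "\<forall>d. h d > 0"
    and C0: "C0 > 0"
    and h_lim: "((\<lambda>d. (h d)^2 / real d) \<longlongrightarrow> C0) sequentially"
  shows
    "(\<forall>j\<in>{1..J}. \<forall>i\<in>{1..n j}. \<forall>k\<in>{1..J}.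
        conv_prob M (\<lambda>d \<omega>. gamma_hat \<Psi> (h d) d (n k) (\<lambda>l. X d k l \<omega>) (X d j i \<omega>) / real d)
          (if k = j then (1 - 1 / real (n j)) * theta0 \<Psi> C0 sigma2 nu2 j j
           else theta0 \<Psi> C0 sigma2 nu2 j k))
     \<and>
     (\<forall>i0\<in>{1..J}. \<forall>Z :: nat \<Rightarrow> 'a \<Rightarrow> (nat \<Rightarrow> real).
        (\<forall>d. Z d \<in> measurable (M d) (vecspace d) \<and> distr (M d) (vecspace d) (Z d) = F d i0 \<and>
             prob_space.indep_vars (M d) (\<lambda>_. vecspace d)
               (\<lambda>q. case q of None \<Rightarrow> Z d | Some (j, i) \<Rightarrow> X d j i)
               (insert None (Some ` {(j, i). j \<in> {1..J} \<and> i \<in> {1..n j}})))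
        \<longrightarrow> (\<forall>k\<in>{1..J}.
              conv_prob M (\<lambda>d \<omega>. gamma_hat \<Psi> (h d) d (n k) (\<lambda>l. X d k l \<omega>) (Z d \<omega>) / real d)
                (theta0 \<Psi> C0 sigma2 nu2 i0 k)))"
proof -
  let ?V = "\<lambda>d. vecspace d"
  define s where "s = (\<lambda>j k. sigma2 j + sigma2 k + (if j = k then 0 else nu2 j k))"
  have th: "theta0 \<Psi> C0 sigma2 nu2 j k = \<Psi> (s j k / C0) * s j k" for j k
    unfolding theta0_def s_def Let_def by simp
  have sig_nn: "sigma2 j \<ge> 0" if "j \<in> {1..J}" for j
  proof (rule LIMSEQ_le_const[OF A2a[rule_format, OF that]])
    show "\<exists>N. \<forall>d\<ge>N. 0 \<le> trace_cov (F d j) d / real d"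
      by (auto intro!: exI[of _ 0] divide_nonneg_nonneg sum_nonneg Bochner_Integration.integral_nonneg simp: trace_cov_def)
  qed
  have nu_nn: "nu2 j k \<ge> 0" if "j \<in> {1..J}" "k \<in> {1..J}" "j \<noteq> k" for j k
  proof (rule LIMSEQ_le_const[OF A2b[rule_format, OF that]])
    show "\<exists>N. \<forall>d\<ge>N. 0 \<le> (\<Sum>k'<d. (mean_vec (F d j) d k' - mean_vec (F d k) d k')^2) / real d"
      by (auto intro!: exI[of _ 0] divide_nonneg_nonneg sum_nonneg)
  qed
  have s_nn: "s j k \<ge> 0" if "j \<in> {1..J}" "k \<in> {1..J}" for j k
    using sig_nn[OF that(1)] sig_nn[OF that(2)] nu_nn[OF that] unfolding s_def by auto
  have pairconv: "conv_prob M (\<lambda>d \<omega>. sqdist d (Pt d \<omega>) (Q d \<omega>) / real d) (s j k)"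
    if jk: "j \<in> {1..J}" "k \<in> {1..J}"
      and Pm: "\<And>d. Pt d \<in> measurable (M d) (vecspace d)"
      and Qm: "\<And>d. Q d \<in> measurable (M d) (vecspace d)"
      and Pd: "\<And>d. distr (M d) (vecspace d) (Pt d) = F d j"
      and Qd: "\<And>d. distr (M d) (vecspace d) (Q d) = F d k"
      and ind: "\<And>d. prob_space.indep_var (M d) (vecspace d) (Pt d) (vecspace d) (Q d)"
    for j k and Pt Q :: "nat \<Rightarrow> 'a \<Rightarrow> nat \<Rightarrow> real"
  proof (rule pair_conv[where A = "\<lambda>d. F d j" and B = "\<lambda>d. F d k"])
    show "\<And>d. prob_space (M d)" using M by blast
    show "\<And>d. Pt d \<in> measurable (M d) (vecspace d)" by (rule Pm)
    show "\<And>d. Q d \<in> measurable (M d) (vecspace d)" by (rule Qm)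
    show "\<And>d. distr (M d) (vecspace d \<Otimes>\<^sub>M vecspace d) (\<lambda>\<omega>. (Pt d \<omega>, Q d \<omega>)) = F d j \<Otimes>\<^sub>M F d k"
    proof -
      fix d
      interpret prob_space "M d" using M by blast
      show "distr (M d) (vecspace d \<Otimes>\<^sub>M vecspace d) (\<lambda>\<omega>. (Pt d \<omega>, Q d \<omega>)) = F d j \<Otimes>\<^sub>M F d k"
        using ind[of d] unfolding indep_var_distribution_eq Pd Qd by simp
    qed
    show "conv_prob (\<lambda>d. F d j \<Otimes>\<^sub>M F d k)
      (\<lambda>d (x, y). 1 / real d * (\<Sum>k<d. (x k - y k)^2) -
        (\<integral>(x', y'). (1 / real d) * (\<Sum>k<d. (x' k - y' k)^2) \<partial>(F d j \<Otimes>\<^sub>M F d k))) 0"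
      using A1b jk by blast
    have Eeq: "(\<integral>(x', y'). (1 / real d) * (\<Sum>k<d. (x' k - y' k)^2) \<partial>(F d j \<Otimes>\<^sub>M F d k))
      = trace_cov (F d j) d / real d + trace_cov (F d k) d / real d
        + (\<Sum>k'<d. (mean_vec (F d j) d k' - mean_vec (F d k) d k')^2) / real d" for d
    proof -
      interpret prob_space "M d" using M by blast
      show ?thesis
        by (subst integral_identity[OF Pm Qm ind Pd Qd]) (use F_mom jk in \<open>auto simp: add_divide_distrib\<close>)
    qed
    have lim3: "((\<lambda>d. (\<Sum>k'<d. (mean_vec (F d j) d k' - mean_vec (F d k) d k')^2) / real d)
        \<longlongrightarrow> (if j = k then 0 else nu2 j k)) sequentially"
      using A2b jk by (cases "j = k") auto
    show "((\<lambda>d. \<integral>(x', y'). (1 / real d) * (\<Sum>k<d. (x' k - y' k)^2) \<partial>(F d j \<Otimes>\<^sub>M F d k)) \<longlongrightarrow> s j k) sequentially"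
      unfolding Eeq s_def
      by (intro tendsto_add lim3) (use A2a jk in auto)
  qed
  have Xm: "X d j i \<in> measurable (M d) (vecspace d)" if "j \<in> {1..J}" "i \<in> {1..n j}" for d j i
    using X_meas that by blast
  have sumeval: "(1 / real N) * (\<Sum>l=1..N. \<Psi> (s j k / C0) * s j k) = \<Psi> (s j k / C0) * s j k"
    if "N > 0" for N j k
    using that by simp
  have partA: "conv_prob M (\<lambda>d \<omega>. gamma_hat \<Psi> (h d) d (n k) (\<lambda>l. X d k l \<omega>) (X d j i \<omega>) / real d)
          (if k = j then (1 - 1 / real (n j)) * theta0 \<Psi> C0 sigma2 nu2 j j
           else theta0 \<Psi> C0 sigma2 nu2 j k)"
    if ji: "j \<in> {1..J}" "i \<in> {1..n j}" and k: "k \<in> {1..J}" for j i k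
  proof -
    define c where "c = (\<lambda>l. if k = j \<and> l = i then 0 else s j k)"
    have g: "conv_prob M (\<lambda>d \<omega>. gamma_hat \<Psi> (h d) d (n k) (\<lambda>l. X d k l \<omega>) (X d j i \<omega>) / real d)
           ((1 / real (n k)) * (\<Sum>l=1..n k. \<Psi> (c l / C0) * c l))"
    proof (rule gamma_conv[where Xs = "\<lambda>d l. X d k l"])
      show "\<And>d. prob_space (M d)" using M by blast
      show "\<And>d. X d j i \<in> measurable (M d) (vecspace d)" by (rule Xm[OF ji])
      show "\<And>d l. l \<in> {1..n k} \<Longrightarrow> X d k l \<in> measurable (M d) (vecspace d)" by (rule Xm[OF k])
      show "\<And>l. l \<in> {1..n k} \<Longrightarrow> c l \<ge> 0" using s_nn[OF ji(1) k] unfolding c_def by auto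
      show "continuous_on {0..} \<Psi>" "\<forall>d. h d > 0" "C0 > 0" "((\<lambda>d. (h d)^2 / real d) \<longlongrightarrow> C0) sequentially"
        using Psi_cont h_pos C0 h_lim by auto
      fix l assume l: "l \<in> {1..n k}"
      show "conv_prob M (\<lambda>d \<omega>. sqdist d (X d j i \<omega>) (X d k l \<omega>) / real d) (c l)"
      proof (cases "k = j \<and> l = i")
        case True
        then show ?thesis unfolding c_def sqdist_def using conv_prob_const[of M 0] by simp
      next
        case False
        have cl: "c l = s j k" using False unfolding c_def by auto
        show ?thesis unfolding cl
        proof (rule pairconv[OF ji(1) k])
          show "\<And>d. X d j i \<in> measurable (M d) (vecspace d)" by (rule Xm[OF ji])
          show "\<And>d. X d k l \<in> measurable (M d) (vecspace d)" by (rule Xm[OF k l])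
          show "\<And>d. distr (M d) (vecspace d) (X d j i) = F d j" using X_dist ji by blast
          show "\<And>d. distr (M d) (vecspace d) (X d k l) = F d k" using X_dist k l by blast
          fix d
          interpret prob_space "M d" using M by blast
          have "indep_var (vecspace d) ((\<lambda>(j, i). X d j i) (j, i)) (vecspace d) ((\<lambda>(j, i). X d j i) (k, l))"
            by (rule indep_vars_pair[OF X_indep[rule_format, of d]]) (use ji k l False in auto)
          then show "indep_var (vecspace d) (X d j i) (vecspace d) (X d k l)" by simp
        qed
      qed
    qed
    have nk: "n k \<ge> 2" using n k by blast
    show ?thesis
    proof (cases "k = j")
      case False
      then have "c = (\<lambda>l. s j k)" unfolding c_def by auto
      then show ?thesis using g False nk th[of j k] by simp
    next
      case True
      have "(\<Sum>l=1..n k. \<Psi> (c l / C0) * c l) = (\<Sum>l\<in>{1..n k} - {i}. \<Psi> (s j k / C0) * s j k)"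
        using ji True by (subst sum.remove[of _ i]) (auto simp: c_def intro!: sum.cong)
      also have "\<dots> = (real (n k) - 1) * (\<Psi> (s j k / C0) * s j k)"
        using ji True nk by (simp add: of_nat_diff)
      finally have "(1 / real (n k)) * (\<Sum>l=1..n k. \<Psi> (c l / C0) * c l) = (1 - 1 / real (n j)) * theta0 \<Psi> C0 sigma2 nu2 j j"
        using True nk th[of j j] by (simp add: field_simps)
      then show ?thesis using g True by simp
    qed
  qed
  have partB: "conv_prob M (\<lambda>d \<omega>. gamma_hat \<Psi> (h d) d (n k) (\<lambda>l. X d k l \<omega>) (Z d \<omega>) / real d)
                (theta0 \<Psi> C0 sigma2 nu2 i0 k)"
    if i0: "i0 \<in> {1..J}" and k: "k \<in> {1..J}"
      and Zh: "\<forall>d. Z d \<in> measurable (M d) (vecspace d) \<and> distr (M d) (vecspace d) (Z d) = F d i0 \<and>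
             prob_space.indep_vars (M d) (\<lambda>_. vecspace d)
               (\<lambda>q. case q of None \<Rightarrow> Z d | Some (j, i) \<Rightarrow> X d j i)
               (insert None (Some ` {(j, i). j \<in> {1..J} \<and> i \<in> {1..n j}}))"
    for i0 k and Z :: "nat \<Rightarrow> 'a \<Rightarrow> nat \<Rightarrow> real"
  proof -
    have g: "conv_prob M (\<lambda>d \<omega>. gamma_hat \<Psi> (h d) d (n k) (\<lambda>l. X d k l \<omega>) (Z d \<omega>) / real d)
           ((1 / real (n k)) * (\<Sum>l=1..n k. \<Psi> (s i0 k / C0) * s i0 k))"
    proof (rule gamma_conv[where Xs = "\<lambda>d l. X d k l"])
      show "\<And>d. prob_space (M d)" using M by blast
      show "\<And>d. Z d \<in> measurable (M d) (vecspace d)" using Zh by blast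
      show "\<And>d l. l \<in> {1..n k} \<Longrightarrow> X d k l \<in> measurable (M d) (vecspace d)" by (rule Xm[OF k])
      show "\<And>l. l \<in> {1..n k} \<Longrightarrow> s i0 k \<ge> 0" using s_nn[OF i0 k] by auto
      show "continuous_on {0..} \<Psi>" "\<forall>d. h d > 0" "C0 > 0" "((\<lambda>d. (h d)^2 / real d) \<longlongrightarrow> C0) sequentially"
        using Psi_cont h_pos C0 h_lim by auto
      fix l assume l: "l \<in> {1..n k}"
      show "conv_prob M (\<lambda>d \<omega>. sqdist d (Z d \<omega>) (X d k l \<omega>) / real d) (s i0 k)"
      proof (rule pairconv[OF i0 k])
        show "\<And>d. Z d \<in> measurable (M d) (vecspace d)" using Zh by blast
        show "\<And>d. X d k l \<in> measurable (M d) (vecspace d)" by (rule Xm[OF k l])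
        show "\<And>d. distr (M d) (vecspace d) (Z d) = F d i0" using Zh by blast
        show "\<And>d. distr (M d) (vecspace d) (X d k l) = F d k" using X_dist k l by blast
        fix d
        interpret prob_space "M d" using M by blast
        have "indep_var (vecspace d) ((\<lambda>q. case q of None \<Rightarrow> Z d | Some (j, i) \<Rightarrow> X d j i) None)
                        (vecspace d) ((\<lambda>q. case q of None \<Rightarrow> Z d | Some (j, i) \<Rightarrow> X d j i) (Some (k, l)))"
          by (rule indep_vars_pair[where I = "insert None (Some ` {(j, i). j \<in> {1..J} \<and> i \<in> {1..n j}})"])
             (use Zh k l in auto)
        then show "indep_var (vecspace d) (Z d) (vecspace d) (X d k l)" by simp
      qed
    qed
    have nk: "n k \<ge> 2" using n k by blast
    then show ?thesis using g th[of i0 k] by simp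
  qed
  show ?thesis
    using partA partB by blast
qed


end
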